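(* For every $n\ge1$, \[ \inf_{\boldsymbol x\in S^n}C(\boldsymbol x)\ge\frac{\Lambda^2}{2\big(2n+2\operatorname{card}(E_{II})+\operatorname{card}(E_{IL})\big)}, \] where $\Lambda=\lambda(S)$.
   Context: Network: $(V,E)$ is a finite connected graph with at least one edge and no vertex of degree $2$; each edge $e$ has a length $\lambda(e)>0$. $S$ is the metric measure space obtained by identifying each edge with a segment of length $\lambda(e)$, with length measure $\lambda$ and shortest-path distance $d$. $V_I$ is the set of vertices of degree $\ge3$ and $V_L$ the set of vertices of degree $1$. $E_{II}$ is the set of edges with both endpoints in $V_I$, and $E_{IL}$ the set of edges with one endpoint in $V_I$ and the other in $V_L$. For $\boldsymbol x=(x_1,\dots,x_n)\in S^n$, the social cost is \[ C(\boldsymbol x)=\int_S\min_i d(x_i,y)\,d\lambda(y). \] *)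

theory Defs
  imports "HOL-Analysis.Analysis"
begin

text \<open>Points of the metric graph S: vertices, or interior points
  of an edge e at coordinate t (0 < t < lam e), measured from the smaller endpoint.\<close>

datatype 'v point = Vtx 'v | Inner "'v set" real

definition network :: "'v set \<Rightarrow> 'v set set \<Rightarrow> ('v set \<Rightarrow> real) \<Rightarrow> bool" where
  "network V E lam \<longleftrightarrow> finite V \<and> E \<noteq> {} \<and>
     (\<forall>e\<in>E. e \<subseteq> V \<and> card e = 2 \<and> lam e > 0) \<and>
     (\<forall>u\<in>V. \<forall>v\<in>V. (\<lambda>a b. {a, b} \<in> E)\<^sup>*\<^sup>* u v) \<and>
     (\<forall>v\<in>V. card {e\<in>E. v \<in> e} \<noteq> 2)"

definition degree :: "'v set set \<Rightarrow> 'v \<Rightarrow> nat" where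
  "degree E v = card {e\<in>E. v \<in> e}"

definition V_I :: "'v set \<Rightarrow> 'v set set \<Rightarrow> 'v set" where
  "V_I V E = {v\<in>V. degree E v \<ge> 3}"

definition V_L :: "'v set \<Rightarrow> 'v set set \<Rightarrow> 'v set" where
  "V_L V E = {v\<in>V. degree E v = 1}"

definition E_II :: "'v set \<Rightarrow> 'v set set \<Rightarrow> 'v set set" where
  "E_II V E = {e\<in>E. e \<subseteq> V_I V E}"

definition E_IL :: "'v set \<Rightarrow> 'v set set \<Rightarrow> 'v set set" where
  "E_IL V E = {e\<in>E. e \<inter> V_I V E \<noteq> {} \<and> e \<inter> V_L V E \<noteq> {}}"

definition pt :: "('v::linorder set \<Rightarrow> real) \<Rightarrow> 'v set \<Rightarrow> real \<Rightarrow> 'v point" where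
  "pt lam e t = (if t = 0 then Vtx (Min e) else if t = lam e then Vtx (Max e) else Inner e t)"

definition Spts :: "'v::linorder set \<Rightarrow> 'v set set \<Rightarrow> ('v set \<Rightarrow> real) \<Rightarrow> 'v point set" where
  "Spts V E lam = Vtx ` V \<union> {Inner e t | e t. e \<in> E \<and> 0 < t \<and> t < lam e}"

text \<open>A path in S: a nonempty list of segments (e, s, t), each traversing edge e
  from coordinate s to coordinate t, consecutive segments glued at common points.\<close>
definition is_path :: "'v::linorder set set \<Rightarrow> ('v set \<Rightarrow> real) \<Rightarrow> 'v point \<Rightarrow> 'v point
     \<Rightarrow> ('v set \<times> real \<times> real) list \<Rightarrow> bool" where
  "is_path E lam x y w \<longleftrightarrow> w \<noteq> [] \<and>
     (\<forall>(e, s, t)\<in>set w. e \<in> E \<and> 0 \<le> s \<and> s \<le> lam e \<and> 0 \<le> t \<and> t \<le> lam e) \<and>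
     (\<forall>i. Suc i < length w \<longrightarrow>
        pt lam (fst (w ! i)) (snd (snd (w ! i))) = pt lam (fst (w ! Suc i)) (fst (snd (w ! Suc i)))) \<and>
     pt lam (fst (hd w)) (fst (snd (hd w))) = x \<and>
     pt lam (fst (last w)) (snd (snd (last w))) = y"

definition path_len :: "('v set \<times> real \<times> real) list \<Rightarrow> real" where
  "path_len w = (\<Sum>(e, s, t)\<leftarrow>w. \<bar>t - s\<bar>)"

definition dist_S :: "'v::linorder set set \<Rightarrow> ('v set \<Rightarrow> real) \<Rightarrow> 'v point \<Rightarrow> 'v point \<Rightarrow> real" where
  "dist_S E lam x y = Inf {path_len w | w. is_path E lam x y w}"

definition integral_S :: "'v::linorder set set \<Rightarrow> ('v set \<Rightarrow> real) \<Rightarrow> ('v point \<Rightarrow> real) \<Rightarrow> real" where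
  "integral_S E lam f = (\<Sum>e\<in>E. integral {0..lam e} (\<lambda>t. f (pt lam e t)))"

definition social_cost :: "'v::linorder set set \<Rightarrow> ('v set \<Rightarrow> real) \<Rightarrow> nat \<Rightarrow> (nat \<Rightarrow> 'v point) \<Rightarrow> real" where
  "social_cost E lam n x = integral_S E lam (\<lambda>y. Min ((\<lambda>i. dist_S E lam (x i) y) ` {..<n}))"

definition total_length :: "'v set set \<Rightarrow> ('v set \<Rightarrow> real) \<Rightarrow> real" where
  "total_length E lam = (\<Sum>e\<in>E. lam e)"

end

theory Submission
  imports Defs
begin


lemma card2_MinMax:
  fixes e :: "'v::linorder set"
  assumes "card e = 2"
  shows "finite e" "Min e \<in> e" "Max e \<in> e" "Min e < Max e" "e = {Min e, Max e}"
proof -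
  obtain a b where ab: "a \<noteq> b" "e = {a,b}" using assms by (meson card_2_iff)
  show "finite e" "Min e \<in> e" "Max e \<in> e" "Min e < Max e" "e = {Min e, Max e}"
    using ab by (auto simp: min_def max_def)
qed

locale netw =
  fixes V :: "'v::linorder set" and E :: "'v set set" and lam :: "'v set \<Rightarrow> real"
  assumes net: "network V E lam"
begin

lemma finV: "finite V" using net by (simp add: network_def)
lemma edge: "e \<in> E \<Longrightarrow> e \<subseteq> V \<and> card e = 2 \<and> lam e > 0" using net by (simp add: network_def)
lemma finE: "finite E"
proof -
  have "E \<subseteq> Pow V" using edge by auto
  thus ?thesis using finV by (meson finite_Pow_iff finite_subset)
qed
lemma conn: "u \<in> V \<Longrightarrow> v \<in> V \<Longrightarrow> (\<lambda>a b. {a, b} \<in> E)\<^sup>*\<^sup>* u v" using net by (simp add: network_def)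
lemma nodeg2: "v \<in> V \<Longrightarrow> degree E v \<noteq> 2" using net by (simp add: network_def degree_def)

lemma Min_V: "e \<in> E \<Longrightarrow> Min e \<in> V" "e \<in> E \<Longrightarrow> Max e \<in> V"
  using edge card2_MinMax by blast+

lemma pt0: "e \<in> E \<Longrightarrow> pt lam e 0 = Vtx (Min e)" by (simp add: pt_def)
lemma ptL: "e \<in> E \<Longrightarrow> pt lam e (lam e) = Vtx (Max e)" using edge[of e] by (simp add: pt_def)
lemma ptI: "0 < u \<Longrightarrow> u < lam e \<Longrightarrow> pt lam e u = Inner e u" by (simp add: pt_def)

lemma pt_inj: "e \<in> E \<Longrightarrow> inj_on (pt lam e) {0..lam e}"
proof (rule inj_onI)
  fix u v assume e: "e \<in> E" and u: "u \<in> {0..lam e}" and v: "v \<in> {0..lam e}" and eq: "pt lam e u = pt lam e v"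
  have ne: "Min e \<noteq> Max e" using edge[OF e] card2_MinMax[of e] by force
  show "u = v" using eq u v ne edge[OF e] by (auto simp: pt_def split: if_splits)
qed

lemma degree_ge1: "e \<in> E \<Longrightarrow> v \<in> e \<Longrightarrow> degree E v \<ge> 1"
proof -
  assume "e \<in> E" "v \<in> e"
  hence "{e\<in>E. v \<in> e} \<noteq> {}" by auto
  moreover have "finite {e\<in>E. v \<in> e}" using finE by auto
  ultimately show ?thesis unfolding degree_def by (simp add: Suc_le_eq card_gt_0_iff)
qed

lemma degree1_unique: "degree E v = 1 \<Longrightarrow> e \<in> E \<Longrightarrow> e' \<in> E \<Longrightarrow> v \<in> e \<Longrightarrow> v \<in> e' \<Longrightarrow> e = e'"
proof -
  assume d: "degree E v = 1" and h: "e \<in> E" "e' \<in> E" "v \<in> e" "v \<in> e'"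
  obtain z where z: "{e\<in>E. v \<in> e} = {z}" using d unfolding degree_def by (meson card_1_singletonE)
  have "e \<in> {z}" "e' \<in> {z}" using h by (simp_all only: z[symmetric]) simp_all
  thus "e = e'" by simp
qed


lemma path_len_Cons[simp]: "path_len ((e,s,t) # w) = \<bar>t - s\<bar> + path_len w"
  by (simp add: path_len_def)
lemma path_len_snoc: "path_len (w @ [(e,s,t)]) = path_len w + \<bar>t - s\<bar>"
  by (simp add: path_len_def)
lemma path_len_nonneg: "path_len w \<ge> 0"
  by (induction w) (auto simp: path_len_def)

lemma is_path_snoc:
  assumes p: "is_path E lam x (pt lam e s) w" and e: "e \<in> E"
    and st: "0 \<le> s" "s \<le> lam e" "0 \<le> t" "t \<le> lam e"
  shows "is_path E lam x (pt lam e t) (w @ [(e,s,t)])"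
proof -
  have ne: "w \<noteq> []" using p by (simp add: is_path_def)
  have glue: "pt lam (fst ((w @ [(e,s,t)]) ! i)) (snd (snd ((w @ [(e,s,t)]) ! i))) =
      pt lam (fst ((w @ [(e,s,t)]) ! Suc i)) (fst (snd ((w @ [(e,s,t)]) ! Suc i)))"
    if i: "Suc i < length (w @ [(e,s,t)])" for i
  proof (cases "Suc i < length w")
    case True
    thus ?thesis using p i by (simp add: is_path_def nth_append)
  next
    case False
    hence "Suc i = length w" using i by simp
    hence "i = length w - 1" by simp
    hence "w ! i = last w" using ne by (simp add: last_conv_nth)
    thus ?thesis using p \<open>Suc i = length w\<close> by (simp add: is_path_def nth_append)
  qed
  show ?thesis using p e st ne glue unfolding is_path_def by (auto simp: hd_append)
qed

lemma is_path_single: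
  "e \<in> E \<Longrightarrow> 0 \<le> s \<Longrightarrow> s \<le> lam e \<Longrightarrow> 0 \<le> t \<Longrightarrow> t \<le> lam e \<Longrightarrow>
   is_path E lam (pt lam e s) (pt lam e t) [(e,s,t)]"
  by (simp add: is_path_def)

lemma is_path_Cons:
  assumes p: "is_path E lam x y ((e,s,t) # w)" and ne: "w \<noteq> []"
  shows "is_path E lam (pt lam e t) y w" "x = pt lam e s" "e \<in> E"
    "0 \<le> s" "s \<le> lam e" "0 \<le> t" "t \<le> lam e"
proof -
  have g: "\<And>i. Suc i < length ((e,s,t) # w) \<Longrightarrow>
        pt lam (fst (((e,s,t) # w) ! i)) (snd (snd (((e,s,t) # w) ! i))) =
        pt lam (fst (((e,s,t) # w) ! Suc i)) (fst (snd (((e,s,t) # w) ! Suc i)))"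
    using p unfolding is_path_def by blast
  have g0: "pt lam e t = pt lam (fst (hd w)) (fst (snd (hd w)))"
    using g[of 0] ne by (simp add: hd_conv_nth)
  have gi: "pt lam (fst (w ! i)) (snd (snd (w ! i))) = pt lam (fst (w ! Suc i)) (fst (snd (w ! Suc i)))"
    if "Suc i < length w" for i using g[of "Suc i"] that by simp
  show "is_path E lam (pt lam e t) y w" using p ne g0 gi unfolding is_path_def by auto
  show "x = pt lam e s" "e \<in> E" "0 \<le> s" "s \<le> lam e" "0 \<le> t" "t \<le> lam e"
    using p unfolding is_path_def by auto
qed

definition reach where "reach x y \<longleftrightarrow> (\<exists>w. is_path E lam x y w)"

lemma reach_edge: "reach x (pt lam e s) \<Longrightarrow> e \<in> E \<Longrightarrow> 0 \<le> s \<Longrightarrow> s \<le> lam e \<Longrightarrow> 0 \<le> t \<Longrightarrow> t \<le> lam e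
   \<Longrightarrow> reach x (pt lam e t)"
  unfolding reach_def using is_path_snoc by blast

lemma reach_step: assumes r: "reach x (Vtx u)" and ub: "{u,b} \<in> E" shows "reach x (Vtx b)"
proof -
  let ?e = "{u,b}"
  have c: "card ?e = 2" using edge[OF ub] by simp
  have L: "lam ?e > 0" using edge[OF ub] by simp
  have "u \<noteq> b" using c by auto
  have mm: "?e = {Min ?e, Max ?e}" "Min ?e < Max ?e" using card2_MinMax[OF c] by auto
  show ?thesis
  proof (cases "u = Min ?e")
    case True
    hence "b = Max ?e" using mm \<open>u \<noteq> b\<close> by (metis doubleton_eq_iff)
    thus ?thesis using reach_edge[of x ?e 0 "lam ?e"] r True pt0[OF ub] ptL[OF ub] ub L by simp
  next
    case False
    hence "u = Max ?e" "b = Min ?e" using mm \<open>u \<noteq> b\<close> by (metis doubleton_eq_iff insert_iff)+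
    thus ?thesis using reach_edge[of x ?e "lam ?e" 0] r pt0[OF ub] ptL[OF ub] ub L by simp
  qed
qed

lemma reach_rtrancl: "(\<lambda>a b. {a, b} \<in> E)\<^sup>*\<^sup>* u v \<Longrightarrow> reach x (Vtx u) \<Longrightarrow> reach x (Vtx v)"
  by (induction rule: rtranclp_induct) (auto intro: reach_step)

lemma reach_start: assumes x: "x \<in> Spts V E lam" shows "\<exists>u\<in>V. reach x (Vtx u)"
proof -
  obtain e0 where e0: "e0 \<in> E" using net by (auto simp: network_def)
  show ?thesis
  proof (cases "x \<in> Vtx ` V")
    case True
    then obtain v where v: "v \<in> V" "x = Vtx v" by auto
    have "(\<lambda>a b. {a, b} \<in> E)\<^sup>*\<^sup>* v (Min e0)" using conn v Min_V e0 by auto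
    then show ?thesis
    proof (cases rule: converse_rtranclpE)
      case base
      have "reach (pt lam e0 0) (pt lam e0 0)" unfolding reach_def
        using is_path_single[OF e0, of 0 0] edge[OF e0] by auto
      thus ?thesis using base v pt0[OF e0] by auto
    next
      case (step b)
      let ?e = "{v,b}"
      have ee: "?e \<in> E" using step by simp
      have c: "card ?e = 2" using edge[OF ee] by simp
      have mm: "?e = {Min ?e, Max ?e}" using card2_MinMax[OF c] by auto
      have "reach (pt lam ?e 0) (pt lam ?e 0)" "reach (pt lam ?e (lam ?e)) (pt lam ?e (lam ?e))"
        unfolding reach_def using is_path_single[OF ee] edge[OF ee] by (meson le_less order_refl)+
      hence "reach (Vtx (Min ?e)) (Vtx (Min ?e))" "reach (Vtx (Max ?e)) (Vtx (Max ?e))"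
        using pt0[OF ee] ptL[OF ee] by auto
      moreover have "v = Min ?e \<or> v = Max ?e" using mm by (metis insertI1 insert_iff singletonD)
      ultimately show ?thesis using v by auto
    qed
  next
    case False
    then obtain e u where eu: "x = Inner e u" "e \<in> E" "0 < u" "u < lam e"
      using x unfolding Spts_def by auto
    have "reach (pt lam e u) (pt lam e u)" unfolding reach_def
      using is_path_single[OF eu(2), of u u] eu by auto
    hence "reach x (pt lam e 0)" using reach_edge[of x e u 0] eu ptI[of u e] by auto
    thus ?thesis using pt0[OF eu(2)] Min_V[OF eu(2)] by auto
  qed
qed

lemma reach_all: assumes x: "x \<in> Spts V E lam" and e: "e \<in> E" and t: "0 \<le> t" "t \<le> lam e"
  shows "reach x (pt lam e t)"
proof -
  obtain u where u: "u \<in> V" "reach x (Vtx u)" using reach_start[OF x] by auto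
  have "reach x (Vtx (Min e))" using reach_rtrancl[OF conn[OF u(1) Min_V(1)[OF e]] u(2)] .
  hence "reach x (pt lam e 0)" using pt0[OF e] by simp
  thus ?thesis using reach_edge[of x e 0 t] e t edge[OF e] by auto
qed


lemma path_lower:
  assumes seg: "\<And>e s t. e \<in> E \<Longrightarrow> 0 \<le> s \<Longrightarrow> s \<le> lam e \<Longrightarrow> 0 \<le> t \<Longrightarrow> t \<le> lam e \<Longrightarrow>
        \<bar>h (pt lam e t) - h (pt lam e s)\<bar> \<le> \<bar>t - s\<bar>"
  shows "is_path E lam x y w \<Longrightarrow> \<bar>h y - h x\<bar> \<le> path_len w"
proof (induction w arbitrary: x)
  case Nil
  then show ?case by (simp add: is_path_def)
next
  case (Cons a w)
  obtain e s t where a: "a = (e,s,t)" by (cases a) auto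
  show ?case
  proof (cases "w = []")
    case True
    have "x = pt lam e s" "y = pt lam e t" "e \<in> E" "0 \<le> s" "s \<le> lam e" "0 \<le> t" "t \<le> lam e"
      using Cons.prems True a by (auto simp: is_path_def)
    thus ?thesis using seg a True by (simp add: path_len_def)
  next
    case False
    note c = is_path_Cons[OF Cons.prems[unfolded a] False]
    have "\<bar>h y - h (pt lam e t)\<bar> \<le> path_len w" using Cons.IH[OF c(1)] .
    moreover have "\<bar>h (pt lam e t) - h x\<bar> \<le> \<bar>t - s\<bar>" using seg c(2-7) by simp
    ultimately show ?thesis using a by simp
  qed
qed

lemma dist_lower:
  assumes r: "reach x y"
    and seg: "\<And>e s t. e \<in> E \<Longrightarrow> 0 \<le> s \<Longrightarrow> s \<le> lam e \<Longrightarrow> 0 \<le> t \<Longrightarrow> t \<le> lam e \<Longrightarrow>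
        \<bar>h (pt lam e t) - h (pt lam e s)\<bar> \<le> \<bar>t - s\<bar>"
  shows "\<bar>h y - h x\<bar> \<le> dist_S E lam x y"
  unfolding dist_S_def
proof (rule cInf_greatest)
  show "{path_len w |w. is_path E lam x y w} \<noteq> {}" using r unfolding reach_def by auto
  show "\<And>z. z \<in> {path_len w |w. is_path E lam x y w} \<Longrightarrow> \<bar>h y - h x\<bar> \<le> z"
    using path_lower[OF seg] by blast
qed

lemma dist_lip:
  assumes x: "x \<in> Spts V E lam" and e: "e \<in> E" and st: "0 \<le> s" "s \<le> lam e" "0 \<le> t" "t \<le> lam e"
  shows "dist_S E lam x (pt lam e t) \<le> dist_S E lam x (pt lam e s) + \<bar>t - s\<bar>"
proof -
  let ?S = "\<lambda>u. {path_len w |w. is_path E lam x (pt lam e u) w}"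
  have ne: "?S s \<noteq> {}" using reach_all[OF x e st(1,2)] unfolding reach_def by auto
  have bdd: "bdd_below (?S t)" using path_len_nonneg by (auto intro!: bdd_belowI[of _ 0])
  have "Inf (?S t) - \<bar>t - s\<bar> \<le> Inf (?S s)"
  proof (rule cInf_greatest[OF ne])
    fix z assume "z \<in> ?S s"
    then obtain w where w: "z = path_len w" "is_path E lam x (pt lam e s) w" by auto
    have "is_path E lam x (pt lam e t) (w @ [(e,s,t)])" using is_path_snoc[OF w(2) e st] .
    moreover have "z + \<bar>t - s\<bar> = path_len (w @ [(e,s,t)])" using w(1) by (simp add: path_len_snoc)
    ultimately have "z + \<bar>t - s\<bar> \<in> ?S t" by blast
    hence "Inf (?S t) \<le> z + \<bar>t - s\<bar>" using bdd by (rule cInf_lower)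
    thus "Inf (?S t) - \<bar>t - s\<bar> \<le> z" by simp
  qed
  thus ?thesis unfolding dist_S_def by simp
qed



end

context netw begin
definition hfun :: "'v set \<Rightarrow> (real \<Rightarrow> real) \<Rightarrow> 'v point \<Rightarrow> real" where
  "hfun e0 g p = (case p of Vtx v \<Rightarrow> if v = Min e0 then g 0 else if v = Max e0 then g (lam e0) else 0
                   | Inner e u \<Rightarrow> if e = e0 then g u else 0)"

lemma MinMax_ne: "e \<in> E \<Longrightarrow> Min e \<noteq> Max e"
  using edge card2_MinMax by (metis less_irrefl)

lemma hfun_on: assumes e0: "e0 \<in> E" and u: "0 \<le> u" "u \<le> lam e0"
  shows "hfun e0 g (pt lam e0 u) = g u"
proof -
  consider "u = 0" | "u = lam e0" | "0 < u \<and> u < lam e0" using u by linarith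
  thus ?thesis
  proof cases
    case 1 thus ?thesis using pt0[OF e0] by (simp add: hfun_def)
  next
    case 2 thus ?thesis using ptL[OF e0] MinMax_ne[OF e0] by (simp add: hfun_def)
  next
    case 3 thus ?thesis using ptI[of u e0] by (simp add: hfun_def)
  qed
qed

lemma hfun_off: assumes e0: "e0 \<in> E" and e: "e \<in> E" "e \<noteq> e0" and u: "0 \<le> u" "u \<le> lam e"
  and d0: "g 0 \<noteq> 0 \<Longrightarrow> degree E (Min e0) = 1"
  and dL: "g (lam e0) \<noteq> 0 \<Longrightarrow> degree E (Max e0) = 1"
  shows "hfun e0 g (pt lam e u) = 0"
proof -
  have c0: "card e0 = 2" and c: "card e = 2" using edge e0 e by auto
  have vtx: "hfun e0 g (Vtx v) = 0" if v: "v \<in> e" for v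
  proof -
    have m0: "Min e0 \<in> e0" "Max e0 \<in> e0" using card2_MinMax[OF c0] by auto
    have "g 0 = 0" if "v = Min e0"
    proof (rule ccontr)
      assume "g 0 \<noteq> 0"
      hence "degree E (Min e0) = 1" by (rule d0)
      hence "e = e0" using degree1_unique[of "Min e0" e e0] e e0 v that m0 by blast
      thus False using e(2) by simp
    qed
    moreover have "g (lam e0) = 0" if "v = Max e0"
    proof (rule ccontr)
      assume "g (lam e0) \<noteq> 0"
      hence "degree E (Max e0) = 1" by (rule dL)
      hence "e = e0" using degree1_unique[of "Max e0" e e0] e e0 v that m0 by blast
      thus False using e(2) by simp
    qed
    ultimately show ?thesis by (simp add: hfun_def)
  qed
  have m: "Min e \<in> e" "Max e \<in> e" using card2_MinMax[OF c] by auto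
  consider "u = 0" | "u = lam e" | "0 < u \<and> u < lam e" using u by linarith
  thus ?thesis
  proof cases
    case 1 thus ?thesis using pt0[OF e(1)] vtx m by simp
  next
    case 2 thus ?thesis using ptL[OF e(1)] vtx m by simp
  next
    case 3 thus ?thesis using ptI[of u e] e(2) by (simp add: hfun_def)
  qed
qed

lemma hfun_seg: assumes e0: "e0 \<in> E"
  and lip: "\<And>s t. 0 \<le> s \<Longrightarrow> s \<le> lam e0 \<Longrightarrow> 0 \<le> t \<Longrightarrow> t \<le> lam e0 \<Longrightarrow> \<bar>g t - g s\<bar> \<le> \<bar>t - s\<bar>"
  and d0: "g 0 \<noteq> 0 \<Longrightarrow> degree E (Min e0) = 1"
  and dL: "g (lam e0) \<noteq> 0 \<Longrightarrow> degree E (Max e0) = 1"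
  and e: "e \<in> E" and st: "0 \<le> s" "s \<le> lam e" "0 \<le> t" "t \<le> lam e"
  shows "\<bar>hfun e0 g (pt lam e t) - hfun e0 g (pt lam e s)\<bar> \<le> \<bar>t - s\<bar>"
proof (cases "e = e0")
  case True
  thus ?thesis using hfun_on[OF e0] lip st by simp
next
  case False
  thus ?thesis using hfun_off[OF e0 e False _ _ d0 dL] st by simp
qed

definition Aset :: "nat \<Rightarrow> (nat \<Rightarrow> 'v point) \<Rightarrow> 'v set \<Rightarrow> real set" where
  "Aset n x e = {u\<in>{0..lam e}. \<exists>i<n. pt lam e u = x i}
     \<union> (if degree E (Min e) \<noteq> 1 then {0} else {}) \<union> (if degree E (Max e) \<noteq> 1 then {lam e} else {})"

lemma Aset_finite: assumes e: "e \<in> E" shows "finite (Aset n x e)"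
proof -
  have "{u\<in>{0..lam e}. \<exists>i<n. pt lam e u = x i} \<subseteq> pt lam e -` (x ` {..<n}) \<inter> {0..lam e}" by blast
  moreover have "finite (pt lam e -` (x ` {..<n}) \<inter> {0..lam e})"
    by (rule finite_vimage_IntI) (simp_all add: pt_inj[OF e])
  ultimately have "finite {u\<in>{0..lam e}. \<exists>i<n. pt lam e u = x i}" by (rule finite_subset)
  thus ?thesis unfolding Aset_def by simp
qed

lemma Aset_sub: assumes e: "e \<in> E" shows "Aset n x e \<subseteq> {0..lam e}"
proof -
  have "lam e > 0" using edge[OF e] by simp
  thus ?thesis unfolding Aset_def by (simp add: subset_iff)
qed

end

lemma Min_le_shift:
  fixes X Y :: "real set"
  assumes "finite X" "finite Y" "Y \<noteq> {}" "\<forall>y\<in>Y. \<exists>x\<in>X. x \<le> y + d"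
  shows "Min X \<le> Min Y + d"
proof -
  obtain x where "x \<in> X" "x \<le> Min Y + d" using assms Min_in[of Y] by blast
  thus ?thesis using assms(1) Min_le[of X x] by linarith
qed

definition gfun :: "real \<Rightarrow> real set \<Rightarrow> real \<Rightarrow> real" where
  "gfun mu A t = Min (insert mu ((\<lambda>a. \<bar>t - a\<bar>) ` A))"

lemma gfun_le: assumes "finite A" shows "gfun mu A t \<le> gfun mu A s + \<bar>t - s\<bar>"
  unfolding gfun_def
proof (rule Min_le_shift)
  show "\<forall>y\<in>insert mu ((\<lambda>a. \<bar>s - a\<bar>) ` A). \<exists>x\<in>insert mu ((\<lambda>a. \<bar>t - a\<bar>) ` A). x \<le> y + \<bar>t - s\<bar>"
  proof
    fix y assume "y \<in> insert mu ((\<lambda>a. \<bar>s - a\<bar>) ` A)"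
    then consider "y = mu" | a where "a \<in> A" "y = \<bar>s - a\<bar>" by blast
    thus "\<exists>x\<in>insert mu ((\<lambda>a. \<bar>t - a\<bar>) ` A). x \<le> y + \<bar>t - s\<bar>"
    proof cases
      case 1 thus ?thesis by (intro bexI[of _ mu]) auto
    next
      case 2
      have "\<bar>t - a\<bar> \<le> \<bar>s - a\<bar> + \<bar>t - s\<bar>" by arith
      thus ?thesis using 2 by (intro bexI[of _ "\<bar>t - a\<bar>"]) auto
    qed
  qed
qed (use assms in auto)

lemma gfun_lip: "finite A \<Longrightarrow> \<bar>gfun mu A t - gfun mu A s\<bar> \<le> \<bar>t - s\<bar>"
  using gfun_le[of A mu t s] gfun_le[of A mu s t] by (simp add: abs_le_iff abs_minus_commute)

lemma gfun_nonneg: "finite A \<Longrightarrow> mu \<ge> 0 \<Longrightarrow> gfun mu A t \<ge> 0"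
  unfolding gfun_def by (simp add: Min_ge_iff)

lemma gfun_zero: assumes "finite A" "mu \<ge> 0" "a \<in> A" shows "gfun mu A a = 0"
proof -
  have "gfun mu A a \<le> \<bar>a - a\<bar>" unfolding gfun_def using assms by (intro Min_le) auto
  thus ?thesis using gfun_nonneg[OF assms(1,2), of a] by simp
qed

lemma gfun_tent: assumes A: "finite A"
  shows "gfun mu A t \<ge> mu - (\<Sum>a\<in>A. max 0 (mu - \<bar>t - a\<bar>))"
proof -
  have nn: "(\<Sum>a\<in>A. max 0 (mu - \<bar>t - a\<bar>)) \<ge> 0" by (simp add: sum_nonneg)
  have "gfun mu A t \<in> insert mu ((\<lambda>a. \<bar>t - a\<bar>) ` A)" unfolding gfun_def using A by (intro Min_in) auto
  then consider "gfun mu A t = mu" | a where "a \<in> A" "gfun mu A t = \<bar>t - a\<bar>" by auto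
  thus ?thesis
  proof cases
    case 1 thus ?thesis using nn by simp
  next
    case 2
    have "max 0 (mu - \<bar>t - a\<bar>) \<le> (\<Sum>a\<in>A. max 0 (mu - \<bar>t - a\<bar>))"
      using A 2(1) by (intro member_le_sum) auto
    thus ?thesis using 2 by simp
  qed
qed


lemma lip_cont:
  fixes f :: "real \<Rightarrow> real"
  assumes "\<And>s t. s \<in> S \<Longrightarrow> t \<in> S \<Longrightarrow> \<bar>f t - f s\<bar> \<le> \<bar>t - s\<bar>"
  shows "continuous_on S f"
  unfolding continuous_on_iff
proof (intro ballI allI impI)
  fix x e :: real assume "x \<in> S" "e > 0"
  show "\<exists>d>0. \<forall>x'\<in>S. dist x' x < d \<longrightarrow> dist (f x') (f x) < e"
    using assms \<open>x \<in> S\<close> \<open>e > 0\<close> by (intro exI[of _ e]) (force simp: dist_real_def)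
qed

context netw begin

lemma h_zero: assumes e: "e \<in> E" and mu: "mu \<ge> 0" and i: "i < n" and xi: "x i \<in> Spts V E lam"
  shows "hfun e (gfun mu (Aset n x e)) (x i) = 0"
proof -
  let ?A = "Aset n x e"
  have fA: "finite ?A" using Aset_finite[OF e] .
  have L: "lam e > 0" using edge[OF e] by simp
  show ?thesis
  proof (cases "x i")
    case (Vtx v)
    have "gfun mu ?A 0 = 0" if "v = Min e"
    proof -
      have "pt lam e 0 = x i" using pt0[OF e] Vtx that by simp
      hence "0 \<in> ?A" using i L unfolding Aset_def by auto
      thus ?thesis using gfun_zero[OF fA mu] by blast
    qed
    moreover have "gfun mu ?A (lam e) = 0" if "v = Max e"
    proof -
      have "pt lam e (lam e) = x i" using ptL[OF e] Vtx that by simp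
      hence "lam e \<in> ?A" using i L unfolding Aset_def by auto
      thus ?thesis using gfun_zero[OF fA mu] by blast
    qed
    ultimately show ?thesis using Vtx by (simp add: hfun_def)
  next
    case (Inner e' u)
    show ?thesis
    proof (cases "e' = e")
      case True
      have "Inner e u \<in> Spts V E lam" using xi Inner True by simp
      hence u: "0 < u" "u < lam e" unfolding Spts_def by auto
      hence "pt lam e u = x i" using ptI[OF u] Inner True by simp
      hence "u \<in> ?A" using i u unfolding Aset_def by auto
      thus ?thesis using gfun_zero[OF fA mu] Inner True by (simp add: hfun_def)
    next
      case False thus ?thesis using Inner by (simp add: hfun_def)
    qed
  qed
qed

lemma dist_ge_g: assumes e: "e \<in> E" and mu: "mu \<ge> 0" and i: "i < n"
  and xs: "\<forall>i<n. x i \<in> Spts V E lam" and t: "0 \<le> t" "t \<le> lam e"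
  shows "gfun mu (Aset n x e) t \<le> dist_S E lam (x i) (pt lam e t)"
proof -
  let ?A = "Aset n x e"
  let ?g = "gfun mu ?A"
  have fA: "finite ?A" using Aset_finite[OF e] .
  have L: "lam e > 0" using edge[OF e] by simp
  have d0: "degree E (Min e) = 1" if "?g 0 \<noteq> 0"
  proof (rule ccontr)
    assume "degree E (Min e) \<noteq> 1"
    hence "0 \<in> ?A" unfolding Aset_def by simp
    thus False using gfun_zero[OF fA mu] that by blast
  qed
  have dL: "degree E (Max e) = 1" if "?g (lam e) \<noteq> 0"
  proof (rule ccontr)
    assume "degree E (Max e) \<noteq> 1"
    hence "lam e \<in> ?A" unfolding Aset_def by simp
    thus False using gfun_zero[OF fA mu] that by blast
  qed
  have "\<bar>hfun e ?g (pt lam e t) - hfun e ?g (x i)\<bar> \<le> dist_S E lam (x i) (pt lam e t)"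
    by (rule dist_lower[OF reach_all[OF xs[rule_format, OF i] e t]])
       (rule hfun_seg[OF e gfun_lip[OF fA] d0 dL], assumption+)
  thus ?thesis using hfun_on[OF e t] h_zero[of e mu i n x, OF e mu i xs[rule_format, OF i]] gfun_nonneg[OF fA mu, of t]
    by simp
qed

definition fmin :: "nat \<Rightarrow> (nat \<Rightarrow> 'v point) \<Rightarrow> 'v set \<Rightarrow> real \<Rightarrow> real" where
  "fmin n x e t = Min ((\<lambda>i. dist_S E lam (x i) (pt lam e t)) ` {..<n})"

lemma fmin_ge_g: assumes e: "e \<in> E" and mu: "mu \<ge> 0" and n: "n \<ge> 1"
  and xs: "\<forall>i<n. x i \<in> Spts V E lam" and t: "0 \<le> t" "t \<le> lam e"
  shows "gfun mu (Aset n x e) t \<le> fmin n x e t"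
proof -
  have ne: "{..<n} \<noteq> {}" using n by (metis One_nat_def Suc_le_eq empty_iff lessThan_iff)
  show ?thesis unfolding fmin_def using ne dist_ge_g[OF e mu _ xs t] by (simp add: Min_ge_iff)
qed

lemma fmin_le: assumes e: "e \<in> E" and n: "n \<ge> 1"
  and xs: "\<forall>i<n. x i \<in> Spts V E lam" and st: "0 \<le> s" "s \<le> lam e" "0 \<le> t" "t \<le> lam e"
  shows "fmin n x e t \<le> fmin n x e s + \<bar>t - s\<bar>"
  unfolding fmin_def
proof (rule Min_le_shift)
  show "\<forall>y\<in>(\<lambda>i. dist_S E lam (x i) (pt lam e s)) ` {..<n}.
          \<exists>z\<in>(\<lambda>i. dist_S E lam (x i) (pt lam e t)) ` {..<n}. z \<le> y + \<bar>t - s\<bar>"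
    using dist_lip[OF xs[rule_format] e st] by blast
qed (use n in \<open>auto simp: lessThan_empty_iff\<close>)

lemma fmin_cont: assumes e: "e \<in> E" and n: "n \<ge> 1" and xs: "\<forall>i<n. x i \<in> Spts V E lam"
  shows "continuous_on {0..lam e} (fmin n x e)"
proof (rule lip_cont)
  fix s t assume "s \<in> {0..lam e}" "t \<in> {0..lam e}"
  thus "\<bar>fmin n x e t - fmin n x e s\<bar> \<le> \<bar>t - s\<bar>"
    using fmin_le[OF e n xs, of s t] fmin_le[OF e n xs, of t s] by (auto simp: abs_le_iff abs_minus_commute)
qed

end


lemma poly_int:
  fixes p q mu :: real
  assumes pq: "p \<le> q"
  shows "((\<lambda>t. mu - (t - p)) has_integral (mu * (q - p) - (q - p)^2 / 2)) {p..q}"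
proof -
  have "((\<lambda>t. mu - (t - p)) has_integral
     ((\<lambda>t. mu * (t - p) - (t - p)^2/2) q - (\<lambda>t. mu * (t - p) - (t - p)^2/2) p)) {p..q}"
  proof (rule fundamental_theorem_of_calculus[OF pq])
    fix x assume "x \<in> {p..q}"
    show "((\<lambda>t. mu * (t - p) - (t - p)^2/2) has_vector_derivative (mu - (x - p))) (at x within {p..q})"
      unfolding has_real_derivative_iff_has_vector_derivative[symmetric]
      by (auto intro!: derivative_eq_intros simp: power2_eq_square field_simps)
  qed
  thus ?thesis by simp
qed

lemma poly_int2:
  fixes p q mu :: real
  assumes pq: "p \<le> q"
  shows "((\<lambda>t. mu - (q - t)) has_integral (mu * (q - p) - (q - p)^2 / 2)) {p..q}"
proof -
  have "((\<lambda>t. mu - (q - t)) has_integral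
     ((\<lambda>t. mu * (t - p) + (q - t)^2/2) q - (\<lambda>t. mu * (t - p) + (q - t)^2/2) p)) {p..q}"
  proof (rule fundamental_theorem_of_calculus[OF pq])
    fix x assume "x \<in> {p..q}"
    show "((\<lambda>t. mu * (t - p) + (q - t)^2/2) has_vector_derivative (mu - (q - x))) (at x within {p..q})"
      unfolding has_real_derivative_iff_has_vector_derivative[symmetric]
      by (auto intro!: derivative_eq_intros simp: power2_eq_square field_simps)
  qed
  thus ?thesis by (simp add: power2_eq_square algebra_simps)
qed

lemma half1:
  fixes p q mu :: real
  assumes pq: "p \<le> q" and mu: "mu \<ge> 0"
  shows "integral {p..q} (\<lambda>t. max 0 (mu - (t - p))) \<le> mu^2 / 2"
proof (cases "q \<le> p + mu")
  case True
  have "integral {p..q} (\<lambda>t. max 0 (mu - (t - p))) = integral {p..q} (\<lambda>t. mu - (t - p))"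
    using True by (intro integral_cong) auto
  also have "\<dots> = mu * (q - p) - (q - p)^2 / 2" using poly_int[OF pq] by (rule integral_unique)
  also have "\<dots> \<le> mu^2/2"
  proof -
    have "mu^2/2 - (mu * (q - p) - (q - p)^2 / 2) = (mu - (q - p))^2/2" by (simp add: power2_eq_square field_simps)
    moreover have "(mu - (q - p))^2/2 \<ge> 0" by simp
    ultimately show ?thesis by linarith
  qed
  finally show ?thesis .
next
  case False
  have int: "(\<lambda>t. max 0 (mu - (t - p))) integrable_on {p..q}"
    by (rule integrable_continuous_interval) (intro continuous_intros)
  have "integral {p..q} (\<lambda>t. max 0 (mu - (t - p))) =
        integral {p..p+mu} (\<lambda>t. max 0 (mu - (t - p))) + integral {p+mu..q} (\<lambda>t. max 0 (mu - (t - p)))"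
    using Henstock_Kurzweil_Integration.integral_combine[of p "p+mu" q, OF _ _ int] mu False by simp
  also have "integral {p..p+mu} (\<lambda>t. max 0 (mu - (t - p))) = integral {p..p+mu} (\<lambda>t. mu - (t - p))"
    by (intro integral_cong) auto
  also have "\<dots> = mu * mu - mu^2/2" using poly_int[of p "p+mu" mu] mu by (simp add: integral_unique)
  also have "integral {p+mu..q} (\<lambda>t. max 0 (mu - (t - p))) = integral {p+mu..q} (\<lambda>t. 0)"
    by (intro integral_cong) auto
  finally show ?thesis by (simp add: power2_eq_square)
qed

lemma half2:
  fixes p q mu :: real
  assumes pq: "p \<le> q" and mu: "mu \<ge> 0"
  shows "integral {p..q} (\<lambda>t. max 0 (mu - (q - t))) \<le> mu^2 / 2"
proof (cases "p \<ge> q - mu")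
  case True
  have "integral {p..q} (\<lambda>t. max 0 (mu - (q - t))) = integral {p..q} (\<lambda>t. mu - (q - t))"
    using True by (intro integral_cong) auto
  also have "\<dots> = mu * (q - p) - (q - p)^2 / 2" using poly_int2[OF pq] by (rule integral_unique)
  also have "\<dots> \<le> mu^2/2"
  proof -
    have "mu^2/2 - (mu * (q - p) - (q - p)^2 / 2) = (mu - (q - p))^2/2" by (simp add: power2_eq_square field_simps)
    moreover have "(mu - (q - p))^2/2 \<ge> 0" by simp
    ultimately show ?thesis by linarith
  qed
  finally show ?thesis .
next
  case False
  have int: "(\<lambda>t. max 0 (mu - (q - t))) integrable_on {p..q}"
    by (rule integrable_continuous_interval) (intro continuous_intros)
  have "integral {p..q} (\<lambda>t. max 0 (mu - (q - t))) =
        integral {p..q-mu} (\<lambda>t. max 0 (mu - (q - t))) + integral {q-mu..q} (\<lambda>t. max 0 (mu - (q - t)))"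
    using Henstock_Kurzweil_Integration.integral_combine[of p "q-mu" q, OF _ _ int] mu False by simp
  also have "integral {q-mu..q} (\<lambda>t. max 0 (mu - (q - t))) = integral {q-mu..q} (\<lambda>t. mu - (q - t))"
    by (intro integral_cong) auto
  also have "\<dots> = mu * mu - mu^2/2" using poly_int2[of "q-mu" q mu] mu by (simp add: integral_unique)
  also have "integral {p..q-mu} (\<lambda>t. max 0 (mu - (q - t))) = integral {p..q-mu} (\<lambda>t. 0)"
    by (intro integral_cong) auto
  finally show ?thesis by (simp add: power2_eq_square)
qed

lemma tent_int:
  fixes a L mu :: real
  assumes a: "0 \<le> a" "a \<le> L" and mu: "mu \<ge> 0"
  shows "integral {0..L} (\<lambda>t. max 0 (mu - \<bar>t - a\<bar>)) \<le> mu^2 * (if a = 0 \<or> a = L then 1/2 else 1)"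
proof -
  have int: "(\<lambda>t. max 0 (mu - \<bar>t - a\<bar>)) integrable_on {0..L}"
    by (rule integrable_continuous_interval) (intro continuous_intros)
  have split: "integral {0..L} (\<lambda>t. max 0 (mu - \<bar>t - a\<bar>)) =
      integral {0..a} (\<lambda>t. max 0 (mu - \<bar>t - a\<bar>)) + integral {a..L} (\<lambda>t. max 0 (mu - \<bar>t - a\<bar>))"
    using Henstock_Kurzweil_Integration.integral_combine[OF a int] by simp
  have i1: "integral {0..a} (\<lambda>t. max 0 (mu - \<bar>t - a\<bar>)) = integral {0..a} (\<lambda>t. max 0 (mu - (a - t)))"
    by (intro integral_cong) auto
  have i2: "integral {a..L} (\<lambda>t. max 0 (mu - \<bar>t - a\<bar>)) = integral {a..L} (\<lambda>t. max 0 (mu - (t - a)))"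
    by (intro integral_cong) auto
  have b1: "integral {0..a} (\<lambda>t. max 0 (mu - (a - t))) \<le> mu^2/2" using half2[OF a(1) mu] .
  have b2: "integral {a..L} (\<lambda>t. max 0 (mu - (t - a))) \<le> mu^2/2" using half1[OF a(2) mu] .
  show ?thesis
  proof (cases "a = 0 \<or> a = L")
    case True
    then consider "a = 0" | "a = L" by blast
    thus ?thesis
    proof cases
      case 1 thus ?thesis using split i2 b2 by simp
    next
      case 2 thus ?thesis using split i1 b1 by simp
    qed
  next
    case False thus ?thesis using split i1 i2 b1 b2 by simp
  qed
qed


context netw begin

definition wt :: "'v set \<Rightarrow> real set \<Rightarrow> real" where
  "wt e A = (\<Sum>a\<in>A. if a = 0 \<or> a = lam e then 1/2 else 1)"

lemma edge_int: assumes e: "e \<in> E" and mu: "mu \<ge> 0" and n: "n \<ge> 1"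
  and xs: "\<forall>i<n. x i \<in> Spts V E lam"
  shows "mu * lam e - mu^2 * wt e (Aset n x e) \<le> integral {0..lam e} (fmin n x e)"
proof -
  let ?A = "Aset n x e"
  let ?T = "\<lambda>t. \<Sum>a\<in>?A. max 0 (mu - \<bar>t - a\<bar>)"
  have fA: "finite ?A" using Aset_finite[OF e] .
  have L: "lam e > 0" using edge[OF e] by simp
  have intf: "fmin n x e integrable_on {0..lam e}"
    by (rule integrable_continuous_interval[OF fmin_cont[OF e n xs]])
  have inta: "(\<lambda>t. max 0 (mu - \<bar>t - a\<bar>)) integrable_on {0..lam e}" for a
    by (rule integrable_continuous_interval) (intro continuous_intros)
  have intT: "?T integrable_on {0..lam e}"
    by (rule integrable_sum[OF fA]) (rule inta)
  have intc: "(\<lambda>t. mu) integrable_on {0..lam e}" by (rule integrable_const_ivl)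
  have "integral {0..lam e} (\<lambda>t. mu - ?T t) \<le> integral {0..lam e} (fmin n x e)"
  proof (rule integral_le)
    show "(\<lambda>t. mu - ?T t) integrable_on {0..lam e}" using integrable_diff[OF intc intT] .
    show "fmin n x e integrable_on {0..lam e}" by (rule intf)
    fix t assume "t \<in> {0..lam e}"
    thus "mu - ?T t \<le> fmin n x e t" using gfun_tent[OF fA, of mu t] fmin_ge_g[OF e mu n xs, of t] by auto
  qed
  moreover have "integral {0..lam e} (\<lambda>t. mu - ?T t) = mu * lam e - (\<Sum>a\<in>?A. integral {0..lam e} (\<lambda>t. max 0 (mu - \<bar>t - a\<bar>)))"
    using integral_diff[OF intc intT] integral_sum[OF fA inta] L by simp
  moreover have "(\<Sum>a\<in>?A. integral {0..lam e} (\<lambda>t. max 0 (mu - \<bar>t - a\<bar>))) \<le> mu^2 * wt e ?A"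
  proof -
    have "(\<Sum>a\<in>?A. integral {0..lam e} (\<lambda>t. max 0 (mu - \<bar>t - a\<bar>))) \<le>
          (\<Sum>a\<in>?A. mu^2 * (if a = 0 \<or> a = lam e then 1/2 else 1))"
    proof (rule sum_mono)
      fix a assume "a \<in> ?A"
      hence "0 \<le> a" "a \<le> lam e" using Aset_sub[OF e, of n x] by auto
      thus "integral {0..lam e} (\<lambda>t. max 0 (mu - \<bar>t - a\<bar>)) \<le> mu^2 * (if a = 0 \<or> a = lam e then 1/2 else 1)"
        using tent_int[OF _ _ mu] by blast
    qed
    thus ?thesis unfolding wt_def by (simp add: sum_distrib_left)
  qed
  ultimately show ?thesis by linarith
qed

end


context netw begin

definition ch :: "'v set \<Rightarrow> 'v point \<Rightarrow> bool" where
  "ch e p \<longleftrightarrow> (\<exists>u. 0 < u \<and> u < lam e \<and> p = Inner e u) \<or> (\<exists>v\<in>e. degree E v = 1 \<and> p = Vtx v)"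

lemma card_real_sum: "finite S \<Longrightarrow> real (card {p\<in>S. Q p}) = (\<Sum>p\<in>S. if Q p then 1 else 0)"
  using sum.inter_filter[of S "\<lambda>_. 1::real" Q] by simp

lemma ch_sum_le1: "(\<Sum>e\<in>E. if ch e p then 1 else 0 :: real) \<le> 1"
proof (cases p)
  case (Vtx v)
  show ?thesis
  proof (cases "degree E v = 1")
    case True
    have "(\<Sum>e\<in>E. if ch e p then 1 else 0 :: real) \<le> (\<Sum>e\<in>E. if v \<in> e then 1 else 0)"
      by (rule sum_mono) (simp add: ch_def Vtx)
    also have "\<dots> = real (card {e\<in>E. v \<in> e})" using card_real_sum[OF finE, of "\<lambda>e. v \<in> e"] by simp
    also have "\<dots> = 1" using True by (simp add: degree_def)
    finally show ?thesis .
  next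
    case False
    have "(\<Sum>e\<in>E. if ch e p then 1 else 0 :: real) = (\<Sum>e\<in>E. 0)"
      by (rule sum.cong) (use False in \<open>auto simp: ch_def Vtx\<close>)
    thus ?thesis by simp
  qed
next
  case (Inner e' u)
  have "(\<Sum>e\<in>E. if ch e p then 1 else 0 :: real) \<le> (\<Sum>e\<in>E. if e = e' then 1 else 0)"
    by (rule sum_mono) (simp add: ch_def Inner)
  also have "\<dots> \<le> 1" using finE by (simp add: sum.delta)
  finally show ?thesis .
qed

lemma ch_total: assumes n: "finite P"
  shows "(\<Sum>e\<in>E. real (card {p\<in>P. ch e p})) \<le> card P"
proof -
  have "(\<Sum>e\<in>E. real (card {p\<in>P. ch e p})) = (\<Sum>e\<in>E. \<Sum>p\<in>P. if ch e p then 1 else 0)"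
    using card_real_sum[OF n] by simp
  also have "\<dots> = (\<Sum>p\<in>P. \<Sum>e\<in>E. if ch e p then 1 else 0)" by (rule sum.swap)
  also have "\<dots> \<le> (\<Sum>p\<in>P. 1)" by (rule sum_mono) (rule ch_sum_le1)
  finally show ?thesis by simp
qed

lemma deg_cases: assumes e: "e \<in> E" and v: "v \<in> e"
  shows "v \<in> V_I V E \<or> v \<in> V_L V E"
proof -
  have vV: "v \<in> V" using edge[OF e] v by auto
  have "degree E v \<ge> 1" using degree_ge1[OF e v] .
  moreover have "degree E v \<noteq> 2" using nodeg2[OF vV] .
  ultimately have "degree E v \<ge> 3 \<or> degree E v = 1" by linarith
  thus ?thesis using vV unfolding V_I_def V_L_def by auto
qed

lemma VI_VL_disj: "v \<in> V_I V E \<Longrightarrow> v \<notin> V_L V E"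
  unfolding V_I_def V_L_def by auto

lemma t2_bound: assumes e: "e \<in> E"
  shows "(if Min e \<in> V_I V E then 1/2 else 0) + (if Max e \<in> V_I V E then 1/2 else 0)
     \<le> (if e \<in> E_II V E then 1 else 0) + (if e \<in> E_IL V E then 1/2 else (0::real))"
proof -
  have c: "card e = 2" using edge[OF e] by simp
  have m: "Min e \<in> e" "Max e \<in> e" "e = {Min e, Max e}" using card2_MinMax[OF c] by auto
  have "e \<in> E_II V E" if "Min e \<in> V_I V E" "Max e \<in> V_I V E"
    using that e m(3) unfolding E_II_def by (metis (no_types, lifting) empty_subsetI insert_subset mem_Collect_eq)
  moreover have "e \<in> E_IL V E" if "Min e \<in> V_I V E" "Max e \<notin> V_I V E"
  proof -
    have "Max e \<in> V_L V E" using deg_cases[OF e m(2)] that by simp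
    thus ?thesis using that e m unfolding E_IL_def by blast
  qed
  moreover have "e \<in> E_IL V E" if "Min e \<notin> V_I V E" "Max e \<in> V_I V E"
  proof -
    have "Min e \<in> V_L V E" using deg_cases[OF e m(1)] that by simp
    thus ?thesis using that e m unfolding E_IL_def by blast
  qed
  ultimately show ?thesis by auto
qed


lemma wt_bound: assumes e: "e \<in> E"
  shows "wt e (Aset n x e) \<le> real (card {p \<in> x ` {..<n}. ch e p})
     + (if e \<in> E_II V E then 1 else 0) + (if e \<in> E_IL V E then 1/2 else 0)"
proof -
  let ?A = "Aset n x e"
  let ?L = "lam e"
  let ?F = "{u\<in>{0..?L}. \<exists>i<n. pt lam e u = x i}"
  let ?A' = "?F \<union> {0, ?L}"
  let ?P = "x ` {..<n}"
  define t1 where "t1 a = (if pt lam e a \<in> ?P \<and> ch e (pt lam e a) then 1 else 0::real)" for a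
  define t2 where "t2 a = (if (a = 0 \<and> Min e \<in> V_I V E) \<or> (a = ?L \<and> Max e \<in> V_I V E) then 1/2 else 0::real)" for a
  have L: "?L > 0" using edge[OF e] by simp
  have c: "card e = 2" using edge[OF e] by simp
  have m: "Min e \<in> e" "Max e \<in> e" using card2_MinMax[OF c] by auto
  have fA: "finite ?A" using Aset_finite[OF e] .
  have FA: "?F \<subseteq> ?A" unfolding Aset_def by blast
  have fA': "finite ?A'" using finite_subset[OF FA fA] by simp
  have AA': "?A \<subseteq> ?A'" unfolding Aset_def by auto
  have pw: "(if a = 0 \<or> a = ?L then 1/2 else 1) \<le> t1 a + t2 a" if a: "a \<in> ?A" for a
  proof -
    have a01: "0 \<le> a" "a \<le> ?L" using a Aset_sub[OF e, of n x] by auto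
    have nn: "t1 b \<ge> 0" "t2 b \<ge> 0" for b unfolding t1_def t2_def by auto
    consider "a = 0" | "a = ?L" | "0 < a \<and> a < ?L" using a01 by linarith
    thus ?thesis
    proof cases
      case 1
      show ?thesis
      proof (cases "degree E (Min e) = 1")
        case True
        hence "a \<in> ?F" using a 1 L unfolding Aset_def by (auto split: if_splits)
        then obtain i where i: "i < n" "pt lam e a = x i" by auto
        hence "pt lam e a \<in> ?P" by auto
        moreover have "ch e (pt lam e a)" using 1 pt0[OF e] True m unfolding ch_def by auto
        ultimately have "t1 a = 1" unfolding t1_def by simp
        thus ?thesis using 1 nn[of a] by simp
      next
        case False
        have "Min e \<in> V_I V E" using deg_cases[OF e m(1)] False unfolding V_L_def by auto
        hence "t2 a = 1/2" using 1 unfolding t2_def by simp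
        thus ?thesis using 1 nn[of a] by simp
      qed
    next
      case 2
      have a0: "a \<noteq> 0" using 2 L by simp
      show ?thesis
      proof (cases "degree E (Max e) = 1")
        case True
        hence "a \<in> ?F" using a 2 a0 L unfolding Aset_def by (auto split: if_splits)
        then obtain i where i: "i < n" "pt lam e a = x i" by auto
        hence "pt lam e a \<in> ?P" by auto
        moreover have "ch e (pt lam e a)" using 2 ptL[OF e] True m unfolding ch_def by auto
        ultimately have "t1 a = 1" unfolding t1_def by simp
        thus ?thesis using 2 nn[of a] by simp
      next
        case False
        have "Max e \<in> V_I V E" using deg_cases[OF e m(2)] False unfolding V_L_def by auto
        hence "t2 a = 1/2" using 2 a0 unfolding t2_def by simp
        thus ?thesis using 2 nn[of a] by simp
      qed
    next
      case 3
      hence "a \<in> ?F" using a unfolding Aset_def by (auto split: if_splits)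
      then obtain i where i: "i < n" "pt lam e a = x i" by auto
      hence "pt lam e a \<in> ?P" by auto
      moreover have "ch e (pt lam e a)" using 3 ptI[of a e] unfolding ch_def by auto
      ultimately have "t1 a = 1" unfolding t1_def by simp
      thus ?thesis using 3 nn[of a] by simp
    qed
  qed
  have "wt e ?A \<le> (\<Sum>a\<in>?A. t1 a + t2 a)" unfolding wt_def by (rule sum_mono) (rule pw)
  also have "\<dots> \<le> (\<Sum>a\<in>?A'. t1 a + t2 a)"
    by (rule sum_mono2[OF fA' AA']) (auto simp: t1_def t2_def)
  also have "\<dots> = (\<Sum>a\<in>?A'. t1 a) + (\<Sum>a\<in>?A'. t2 a)" by (rule sum.distrib)
  also have "(\<Sum>a\<in>?A'. t1 a) = real (card {a\<in>?A'. pt lam e a \<in> ?P \<and> ch e (pt lam e a)})"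
    unfolding t1_def using card_real_sum[OF fA', of "\<lambda>a. pt lam e a \<in> ?P \<and> ch e (pt lam e a)"] by simp
  also have "card {a\<in>?A'. pt lam e a \<in> ?P \<and> ch e (pt lam e a)} \<le> card {p \<in> ?P. ch e p}"
  proof (rule card_inj_on_le)
    show "inj_on (pt lam e) {a\<in>?A'. pt lam e a \<in> ?P \<and> ch e (pt lam e a)}"
      by (rule inj_on_subset[OF pt_inj[OF e]]) (use L in auto)
    show "pt lam e ` {a\<in>?A'. pt lam e a \<in> ?P \<and> ch e (pt lam e a)} \<subseteq> {p \<in> ?P. ch e p}" by blast
    show "finite {p \<in> ?P. ch e p}" by simp
  qed
  also have "(\<Sum>a\<in>?A'. t2 a) = (\<Sum>a\<in>{0, ?L}. t2 a)"
    by (rule sum.mono_neutral_right[OF fA']) (auto simp: t2_def)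
  also have "\<dots> = t2 0 + t2 ?L" using L by simp
  also have "\<dots> = (if Min e \<in> V_I V E then 1/2 else 0) + (if Max e \<in> V_I V E then 1/2 else 0)"
    using L unfolding t2_def by simp
  finally show ?thesis using t2_bound[OF e] by simp
qed

lemma wt_total:
  shows "(\<Sum>e\<in>E. wt e (Aset n x e)) \<le> real n + real (card (E_II V E)) + real (card (E_IL V E)) / 2"
proof -
  let ?P = "x ` {..<n}"
  have "(\<Sum>e\<in>E. wt e (Aset n x e)) \<le> (\<Sum>e\<in>E. real (card {p \<in> ?P. ch e p})
     + (if e \<in> E_II V E then 1 else 0) + (if e \<in> E_IL V E then 1/2 else 0))"
    by (rule sum_mono) (rule wt_bound)
  also have "\<dots> = (\<Sum>e\<in>E. real (card {p \<in> ?P. ch e p})) + (\<Sum>e\<in>E. if e \<in> E_II V E then 1 else 0)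
     + (\<Sum>e\<in>E. if e \<in> E_IL V E then 1/2 else 0)"
    by (simp add: sum.distrib)
  also have "(\<Sum>e\<in>E. if e \<in> E_II V E then 1 else 0) = real (card (E_II V E))"
  proof -
    have "{e\<in>E. e \<in> E_II V E} = E_II V E" unfolding E_II_def by auto
    thus ?thesis using card_real_sum[OF finE, of "\<lambda>e. e \<in> E_II V E"] by simp
  qed
  also have "(\<Sum>e\<in>E. if e \<in> E_IL V E then 1/2 else 0) = real (card (E_IL V E)) / 2"
  proof -
    have "{e\<in>E. e \<in> E_IL V E} = E_IL V E" unfolding E_IL_def by auto
    moreover have "(\<Sum>e\<in>E. if e \<in> E_IL V E then 1/2 else (0::real)) = (\<Sum>e\<in>E. if e \<in> E_IL V E then 1 else 0) / 2"
      unfolding sum_divide_distrib by (rule sum.cong) auto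
    ultimately show ?thesis using card_real_sum[OF finE, of "\<lambda>e. e \<in> E_IL V E"] by simp
  qed
  also have "(\<Sum>e\<in>E. real (card {p \<in> ?P. ch e p})) \<le> card ?P" by (rule ch_total) simp
  also have "card ?P \<le> n" using card_image_le[of "{..<n}" x] by simp
  finally show ?thesis by simp
qed


lemma cost_lower: assumes n: "n \<ge> 1" and xs: "\<forall>i<n. x i \<in> Spts V E lam"
  shows "(total_length E lam)\<^sup>2 /
           (2 * (2 * real n + 2 * real (card (E_II V E)) + real (card (E_IL V E))))
         \<le> social_cost E lam n x"
proof -
  let ?La = "total_length E lam"
  define W where "W = real n + real (card (E_II V E)) + real (card (E_IL V E)) / 2"
  define mu where "mu = ?La / (2 * W)"
  have W: "W \<ge> 1" unfolding W_def using n by simp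
  have La: "?La \<ge> 0" unfolding total_length_def using edge by (intro sum_nonneg) (simp add: less_imp_le)
  have mu: "mu \<ge> 0" unfolding mu_def using La W by simp
  have cost: "social_cost E lam n x = (\<Sum>e\<in>E. integral {0..lam e} (fmin n x e))"
    unfolding social_cost_def integral_S_def fmin_def by simp
  have "(\<Sum>e\<in>E. mu * lam e - mu^2 * wt e (Aset n x e)) \<le> social_cost E lam n x"
    unfolding cost by (rule sum_mono) (rule edge_int[OF _ mu n xs])
  moreover have "(\<Sum>e\<in>E. mu * lam e - mu^2 * wt e (Aset n x e))
       = mu * ?La - mu^2 * (\<Sum>e\<in>E. wt e (Aset n x e))"
    unfolding total_length_def by (simp add: sum_subtractf sum_distrib_left)
  moreover have "mu^2 * (\<Sum>e\<in>E. wt e (Aset n x e)) \<le> mu^2 * W"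
    unfolding W_def using wt_total[of n x] by (intro mult_left_mono) auto
  moreover have "mu * ?La - mu^2 * W = ?La^2 / (4 * W)"
    unfolding mu_def using W by (simp add: power2_eq_square field_simps)
  moreover have "(2 * (2 * real n + 2 * real (card (E_II V E)) + real (card (E_IL V E)))) = 4 * W"
    unfolding W_def by simp
  ultimately show ?thesis by simp
qed

end

theorem mainTheorem15:
  fixes V :: "'v::linorder set" and E :: "'v set set" and lam :: "'v set \<Rightarrow> real" and n :: nat
  assumes "network V E lam" and "n \<ge> 1"
  shows "(total_length E lam)\<^sup>2 /
           (2 * (2 * real n + 2 * real (card (E_II V E)) + real (card (E_IL V E))))
         \<le> Inf (social_cost E lam n ` {x. \<forall>i<n. x i \<in> Spts V E lam})"
proof -
  interpret netw V E lam by (rule netw.intro) (rule assms(1))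
  have "E \<noteq> {}" using assms(1) unfolding network_def by (elim conjE)
  then obtain e0 where e0: "e0 \<in> E" by blast
  have "Vtx (Min e0) \<in> Spts V E lam" unfolding Spts_def using Min_V(1)[OF e0] by (intro UnI1 imageI)
  hence m: "(\<lambda>i. Vtx (Min e0)) \<in> {x. \<forall>i<n. x i \<in> Spts V E lam}" by (intro CollectI allI impI)
  have ne: "social_cost E lam n ` {x. \<forall>i<n. x i \<in> Spts V E lam} \<noteq> {}"
    using imageI[OF m, of "social_cost E lam n"] by (rule ex_in_conv[THEN iffD1, OF exI])
  show ?thesis
  proof (rule cInf_greatest[OF ne])
    fix z assume "z \<in> social_cost E lam n ` {x. \<forall>i<n. x i \<in> Spts V E lam}"
    then obtain x where "x \<in> {x. \<forall>i<n. x i \<in> Spts V E lam}" "z = social_cost E lam n x" by (rule imageE)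
    thus "(total_length E lam)\<^sup>2 /
           (2 * (2 * real n + 2 * real (card (E_II V E)) + real (card (E_IL V E)))) \<le> z"
      using cost_lower[OF assms(2)] by simp
  qed
qed


end
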